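(* Let $A_1$ and $A_2$ be algebras of the same dimension $n$ and let $K:A_1\to A_2$ be an algebra isomorphism, identified with its (nonsingular) $n\times n$ matrix in the standard bases. Then $$\mathfrak{u}_{A_1}=K^T\mathfrak{u}_{A_2}K:=\{K^TLK:\ L\in\mathfrak{u}_{A_2}\}.$$
   Context: Throughout, an "algebra" is a real finite-dimensional unital associative algebra whose underlying vector space is $\mathbb{R}^n$ ($n\ge1$), with the standard basis and standard topology; elements are written as column vectors $s=(x_1,\dots,x_n)^T$, and $\mathbf{d}s=(dx_1,\dots,dx_n)^T$. The multiplicative identity is $\mathbf{1}_A$. An uncurling metric of $A$ is a real symmetric $n\times n$ matrix $L$ such that the differential 1-form $(s^{-1})^TL\,\mathbf{d}s=\sum_i (Ls^{-1})_i\,dx_i$ is closed, i.e. $d\big((s^{-1})^TL\,\mathbf{d}s\big)=0$, on an open ball centered at $\mathbf{1}_A$ consisting only of units (here $s^{-1}$ is the multiplicative inverse of $s$ in $A$). The anti-rotor $\mathfrak{u}_A$ is the real vector space of all uncurling metrics of $A$. *)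

theory Defs
  imports "HOL-Analysis.Analysis"
begin

definition is_algebra :: "(real^'n \<Rightarrow> real^'n \<Rightarrow> real^'n) \<Rightarrow> real^'n \<Rightarrow> bool" where
  "is_algebra mul one \<longleftrightarrow> bilinear mul
     \<and> (\<forall>x y z. mul (mul x y) z = mul x (mul y z))
     \<and> (\<forall>x. mul one x = x \<and> mul x one = x)"

definition alg_unit :: "(real^'n \<Rightarrow> real^'n \<Rightarrow> real^'n) \<Rightarrow> real^'n \<Rightarrow> real^'n \<Rightarrow> bool" where
  "alg_unit mul one s \<longleftrightarrow> (\<exists>t. mul s t = one \<and> mul t s = one)"

definition alg_inv :: "(real^'n \<Rightarrow> real^'n \<Rightarrow> real^'n) \<Rightarrow> real^'n \<Rightarrow> real^'n \<Rightarrow> real^'n" where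
  "alg_inv mul one s = (THE t. mul s t = one \<and> mul t s = one)"

text \<open>A differential 1-form \<open>\<Sum>i. \<omega>(s)_i dx_i\<close> on an open set U is closed:
  it is differentiable and \<open>\<partial>\<omega>_i/\<partial>x_j = \<partial>\<omega>_j/\<partial>x_i\<close>.\<close>
definition closed_form_on :: "(real^'n) set \<Rightarrow> (real^'n \<Rightarrow> real^'n) \<Rightarrow> bool" where
  "closed_form_on U \<omega> \<longleftrightarrow> (\<forall>s\<in>U. \<exists>D. (\<omega> has_derivative D) (at s) \<and>
      (\<forall>i j. D (axis j 1) $ i = D (axis i 1) $ j))"

definition uncurling_metric ::
  "(real^'n \<Rightarrow> real^'n \<Rightarrow> real^'n) \<Rightarrow> real^'n \<Rightarrow> real^'n^'n \<Rightarrow> bool" where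
  "uncurling_metric mul one L \<longleftrightarrow> transpose L = L \<and>
     (\<exists>r>0. (\<forall>s\<in>ball one r. alg_unit mul one s) \<and>
            closed_form_on (ball one r) (\<lambda>s. L *v alg_inv mul one s))"

definition anti_rotor :: "(real^'n \<Rightarrow> real^'n \<Rightarrow> real^'n) \<Rightarrow> real^'n \<Rightarrow> (real^'n^'n) set" where
  "anti_rotor mul one = {L. uncurling_metric mul one L}"

end

theory Submission imports Defs begin

lemma comp_eq: "(x::real^'n) $ i = inner x (axis i 1)"
  by (simp add: inner_axis)

lemma sym_lin:
  fixes D :: "real^'n \<Rightarrow> real^'n"
  assumes "linear D" and "\<forall>i j. D (axis j 1) $ i = D (axis i 1) $ j"
  shows "inner u (D v) = inner v (D u)"
proof -
  let ?M = "matrix D"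
  have M: "\<And>x. D x = ?M *v x" using assms(1) by (simp add: matrix_works)
  have T: "transpose ?M = ?M"
    using assms(2) by (simp add: matrix_def transpose_def vec_eq_iff)
  have "inner u (?M *v v) = inner (u v* ?M) v" by (simp add: dot_lmul_matrix)
  also have "u v* ?M = transpose ?M *v u" by simp
  also have "\<dots> = ?M *v u" using T by simp
  finally show ?thesis using M by (simp add: inner_commute)
qed

lemma inv_unique:
  assumes "is_algebra mul one" "mul s t = one" "mul t s = one"
  shows "alg_inv mul one s = t"
  unfolding alg_inv_def
proof (rule the_equality)
  show "mul s t = one \<and> mul t s = one" using assms by simp
next
  fix t' assume h: "mul s t' = one \<and> mul t' s = one"
  have "t' = mul t' (mul s t)" using assms unfolding is_algebra_def by simp
  also have "\<dots> = mul (mul t' s) t" using assms(1) unfolding is_algebra_def by simp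
  also have "\<dots> = t" using h assms(1) unfolding is_algebra_def by simp
  finally show "t' = t" .
qed

lemma pull:
  fixes mul1 mul2 :: "real^'n \<Rightarrow> real^'n \<Rightarrow> real^'n"
    and one1 one2 :: "real^'n" and K Ki :: "real^'n^'n"
  assumes A1: "is_algebra mul1 one1" and A2: "is_algebra mul2 one2"
    and KK: "Ki ** K = mat 1" and KK2: "K ** Ki = mat 1"
    and hom: "\<And>x y. K *v mul1 x y = mul2 (K *v x) (K *v y)"
    and one: "K *v one1 = one2"
    and U: "uncurling_metric mul2 one2 L"
  shows "uncurling_metric mul1 one1 (transpose K ** L ** K)"
proof -
  have inj: "\<And>x y. K *v x = K *v y \<Longrightarrow> x = y"
    by (metis KK matrix_vector_mul_assoc matrix_vector_mul_lid)
  from U obtain r where r: "r > 0" "\<forall>s\<in>ball one2 r. alg_unit mul2 one2 s"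
    and cf: "closed_form_on (ball one2 r) (\<lambda>s. L *v alg_inv mul2 one2 s)"
    and LT: "transpose L = L"
    unfolding uncurling_metric_def by blast
  have "continuous_on UNIV (\<lambda>x. K *v x)"
    by (simp add: linear_continuous_on linear_conv_bounded_linear)
  then have "open {x. K *v x \<in> ball one2 r}"
    using open_vimage[of "ball one2 r" "\<lambda>x. K *v x"] by (simp add: vimage_def)
  moreover have "one1 \<in> {x. K *v x \<in> ball one2 r}" using one r by simp
  ultimately obtain r' where r': "r' > 0" "ball one1 r' \<subseteq> {x. K *v x \<in> ball one2 r}"
    using open_contains_ball by blast
  have unitinv: "alg_unit mul1 one1 s \<and> K *v alg_inv mul1 one1 s = alg_inv mul2 one2 (K *v s)"
    if s: "s \<in> ball one1 r'" for s
  proof -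
    have "K *v s \<in> ball one2 r" using s r' by auto
    then obtain t where t: "mul2 (K *v s) t = one2" "mul2 t (K *v s) = one2"
      using r unfolding alg_unit_def by blast
    have Kt: "K *v (Ki *v t) = t" by (simp add: matrix_vector_mul_assoc KK2)
    have e1: "mul1 s (Ki *v t) = one1"
      by (rule inj) (simp add: hom Kt t one)
    have e2: "mul1 (Ki *v t) s = one1"
      by (rule inj) (simp add: hom Kt t one)
    show ?thesis
      using inv_unique[OF A1 e1 e2] inv_unique[OF A2 t] e1 e2 Kt
      unfolding alg_unit_def by metis
  qed
  have sym: "transpose (transpose K ** L ** K) = transpose K ** L ** K"
    by (simp add: matrix_transpose_mul LT matrix_mul_assoc)
  have cf1: "closed_form_on (ball one1 r') (\<lambda>s. (transpose K ** L ** K) *v alg_inv mul1 one1 s)"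
    unfolding closed_form_on_def
  proof
    fix s assume s: "s \<in> ball one1 r'"
    have Ks: "K *v s \<in> ball one2 r" using s r' by auto
    then obtain D where D: "((\<lambda>s. L *v alg_inv mul2 one2 s) has_derivative D) (at (K *v s))"
      and Dsym: "\<forall>i j. D (axis j 1) $ i = D (axis i 1) $ j"
      using cf unfolding closed_form_on_def by blast
    have linD: "linear D" using D has_derivative_linear by blast
    have dK: "((\<lambda>x. K *v x) has_derivative (\<lambda>h. K *v h)) (at s)"
      by (simp add: bounded_linear_imp_has_derivative linear_conv_bounded_linear)
    have dT: "((\<lambda>x. transpose K *v x) has_derivative (\<lambda>h. transpose K *v h)) (at y)" for y
      by (metis bounded_linear_imp_has_derivative linear_conv_bounded_linear matrix_vector_mul_linear)
    have dg: "((\<lambda>x. transpose K *v (L *v alg_inv mul2 one2 (K *v x))) has_derivative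
        (\<lambda>h. transpose K *v D (K *v h))) (at s)"
      using diff_chain_at[OF diff_chain_at[OF dK D] dT] by (simp add: o_def)
    have df: "((\<lambda>x. (transpose K ** L ** K) *v alg_inv mul1 one1 x) has_derivative
        (\<lambda>h. transpose K *v D (K *v h))) (at s)"
    proof (rule has_derivative_transform_within_open[OF dg _ s])
      show "open (ball one1 r')" by simp
      fix x assume "x \<in> ball one1 r'"
      then show "transpose K *v (L *v alg_inv mul2 one2 (K *v x)) = (transpose K ** L ** K) *v alg_inv mul1 one1 x"
        using unitinv by (simp add: matrix_vector_mul_assoc[symmetric])
    qed
    have "(transpose K *v D (K *v axis j 1)) $ i = (transpose K *v D (K *v axis i 1)) $ j" for i j
    proof -
      have a: "(transpose K *v w) $ i = inner (K *v axis i 1) w" for w i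
        by (simp add: dot_lmul_matrix[symmetric] inner_commute inner_axis')
      show ?thesis unfolding a using sym_lin[OF linD Dsym] by simp
    qed
    then show "\<exists>D. ((\<lambda>x. (transpose K ** L ** K) *v alg_inv mul1 one1 x) has_derivative D) (at s) \<and>
      (\<forall>i j. D (axis j 1) $ i = D (axis i 1) $ j)" using df by blast
  qed
  show ?thesis unfolding uncurling_metric_def using sym cf1 r' unitinv by blast
qed

theorem theorem2p2:
  fixes mul1 mul2 :: "real^'n \<Rightarrow> real^'n \<Rightarrow> real^'n"
    and one1 one2 :: "real^'n" and K :: "real^'n^'n"
  assumes "is_algebra mul1 one1" and "is_algebra mul2 one2"
    and "invertible K"
    and "\<And>x y. K *v mul1 x y = mul2 (K *v x) (K *v y)"
    and "K *v one1 = one2"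
  shows "anti_rotor mul1 one1 = (\<lambda>L. transpose K ** L ** K) ` anti_rotor mul2 one2"
proof -
  obtain Ki where KK2: "K ** Ki = mat 1" and KK: "Ki ** K = mat 1"
    using assms(3) unfolding invertible_def by blast
  have hom2: "Ki *v mul2 x y = mul1 (Ki *v x) (Ki *v y)" for x y
  proof -
    have "mul2 x y = K *v mul1 (Ki *v x) (Ki *v y)"
      by (simp add: assms(4) matrix_vector_mul_assoc KK2)
    then show ?thesis by (simp add: matrix_vector_mul_assoc KK)
  qed
  have one2: "Ki *v one2 = one1"
    using assms(5) by (metis KK matrix_vector_mul_assoc matrix_vector_mul_lid)
  show ?thesis
  proof
    show "(\<lambda>L. transpose K ** L ** K) ` anti_rotor mul2 one2 \<subseteq> anti_rotor mul1 one1"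
      using pull[OF assms(1,2) KK KK2 assms(4,5)] unfolding anti_rotor_def by blast
  next
    show "anti_rotor mul1 one1 \<subseteq> (\<lambda>L. transpose K ** L ** K) ` anti_rotor mul2 one2"
    proof
      fix L assume "L \<in> anti_rotor mul1 one1"
      then have "transpose Ki ** L ** Ki \<in> anti_rotor mul2 one2"
        using pull[OF assms(2,1) KK2 KK hom2 one2] unfolding anti_rotor_def by blast
      moreover have "L = transpose K ** (transpose Ki ** L ** Ki) ** K"
      proof -
        have "transpose K ** transpose Ki = mat 1"
          by (metis KK matrix_transpose_mul transpose_mat)
        then show ?thesis by (simp add: matrix_mul_assoc[symmetric] KK)
          (metis matrix_mul_assoc matrix_mul_lid)
      qed
      ultimately show "L \<in> (\<lambda>L. transpose K ** L ** K) ` anti_rotor mul2 one2" by blast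
    qed
  qed
qed

end
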